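(* Let $K\subset\mathbb{R}^n$ be a closed convex set with diameter $d$, and let $r$ be the largest radius of a Euclidean ball fully contained in $K$. Then the LSE is minimax optimal (i.e. $\varepsilon_K(\sigma)\lesssim\varepsilon^*(\sigma)$) whenever $\sigma\lesssim r/\sqrt n$ or $\sigma\gtrsim d$.
   Context: Gaussian sequence model: $Y=\mu+\xi$, $\mu\in K$, $\xi\sim N(0,\sigma^2\mathbb{I}_n)$; LSE $\hat\mu=\operatorname{argmin}_{\nu\in K}\|Y-\nu\|_2^2$; $\varepsilon_K(\sigma)^2=\sup_{\mu\in K}\mathbb{E}_\mu\|\hat\mu-\mu\|_2^2$. $M(\eta,T)$: maximal cardinality of a subset of $T$ with pairwise distances $>\eta$; $M^{\mathrm{loc}}(\varepsilon)=\sup_{\theta\in K}M(\varepsilon/c^*,B(\theta,\varepsilon)\cap K)$ for a large absolute constant $c^*$ ($B$ the closed Euclidean ball); $\varepsilon^*(\sigma)=\sup\{\varepsilon:\varepsilon^2/\sigma^2\le\log M^{\mathrm{loc}}(\varepsilon)\}$, whose square is up to constants the minimax risk over $K$. $\lesssim,\gtrsim$ hide absolute constants. *)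

theory Defs
  imports "HOL-Analysis.Analysis" "HOL-Probability.Probability"
begin

text \<open>Points of R^n are represented as functions nat => real vanishing outside {..<n}
  (explicit carrier, so that constants can be uniform in the dimension n).\<close>

definition vecs :: "nat \<Rightarrow> (nat \<Rightarrow> real) set" where
  "vecs n = {x. \<forall>i\<ge>n. x i = 0}"

definition enorm :: "nat \<Rightarrow> (nat \<Rightarrow> real) \<Rightarrow> real" where
  "enorm n x = sqrt (\<Sum>i<n. (x i)\<^sup>2)"

definition edist :: "nat \<Rightarrow> (nat \<Rightarrow> real) \<Rightarrow> (nat \<Rightarrow> real) \<Rightarrow> real" where
  "edist n x y = enorm n (\<lambda>i. x i - y i)"

definition eball :: "nat \<Rightarrow> (nat \<Rightarrow> real) \<Rightarrow> real \<Rightarrow> (nat \<Rightarrow> real) set" where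
  "eball n \<theta> \<epsilon> = {x \<in> vecs n. edist n x \<theta> \<le> \<epsilon>}"

definition convex_vec :: "nat \<Rightarrow> (nat \<Rightarrow> real) set \<Rightarrow> bool" where
  "convex_vec n K \<longleftrightarrow> K \<subseteq> vecs n \<and>
     (\<forall>x\<in>K. \<forall>y\<in>K. \<forall>t::real. 0 \<le> t \<and> t \<le> 1 \<longrightarrow> (\<lambda>i. (1 - t) * x i + t * y i) \<in> K)"

definition closed_vec :: "nat \<Rightarrow> (nat \<Rightarrow> real) set \<Rightarrow> bool" where
  "closed_vec n K \<longleftrightarrow> K \<subseteq> vecs n \<and>
     (\<forall>s x. (\<forall>k. s k \<in> K) \<and> x \<in> vecs n \<and> (\<lambda>k. edist n (s k) x) \<longlonglongrightarrow> 0 \<longrightarrow> x \<in> K)"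

definition bounded_vec :: "nat \<Rightarrow> (nat \<Rightarrow> real) set \<Rightarrow> bool" where
  "bounded_vec n K \<longleftrightarrow> (\<exists>R. \<forall>x\<in>K. enorm n x \<le> R)"

definition diam_vec :: "nat \<Rightarrow> (nat \<Rightarrow> real) set \<Rightarrow> real" where
  "diam_vec n K = Sup {edist n x y | x y. x \<in> K \<and> y \<in> K}"

definition inradius :: "nat \<Rightarrow> (nat \<Rightarrow> real) set \<Rightarrow> real" where
  "inradius n K = Sup {\<rho>. 0 \<le> \<rho> \<and> (\<exists>x\<in>vecs n. eball n x \<rho> \<subseteq> K)}"

definition packing :: "nat \<Rightarrow> real \<Rightarrow> (nat \<Rightarrow> real) set \<Rightarrow> enat" where
  "packing n \<eta> T = Sup {enat (card S) | S. finite S \<and> S \<subseteq> T \<and>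
      (\<forall>x\<in>S. \<forall>y\<in>S. x \<noteq> y \<longrightarrow> edist n x y > \<eta>)}"

definition Mloc :: "nat \<Rightarrow> real \<Rightarrow> (nat \<Rightarrow> real) set \<Rightarrow> real \<Rightarrow> enat" where
  "Mloc n cstar K \<epsilon> = (SUP \<theta>\<in>K. packing n (\<epsilon> / cstar) (eball n \<theta> \<epsilon> \<inter> K))"

text \<open>eps*(sigma) = sup{eps : eps^2/sigma^2 <= log M^loc(eps)} (log of an infinite packing number
  read as +infinity).\<close>
definition eps_star :: "nat \<Rightarrow> real \<Rightarrow> (nat \<Rightarrow> real) set \<Rightarrow> real \<Rightarrow> real" where
  "eps_star n cstar K \<sigma> = Sup {\<epsilon>. 0 \<le> \<epsilon> \<and>
      (Mloc n cstar K \<epsilon> = \<infinity> \<or> \<epsilon>\<^sup>2 / \<sigma>\<^sup>2 \<le> ln (real (the_enat (Mloc n cstar K \<epsilon>))))}"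

definition gauss :: "nat \<Rightarrow> real \<Rightarrow> (nat \<Rightarrow> real) measure" where
  "gauss n \<sigma> = PiM {..<n} (\<lambda>_. density lborel (normal_density 0 \<sigma>))"

definition lse :: "nat \<Rightarrow> (nat \<Rightarrow> real) set \<Rightarrow> (nat \<Rightarrow> real) \<Rightarrow> (nat \<Rightarrow> real)" where
  "lse n K Y = (THE \<nu>. \<nu> \<in> K \<and> (\<forall>\<nu>'\<in>K. (edist n Y \<nu>)\<^sup>2 \<le> (edist n Y \<nu>')\<^sup>2))"

definition lse_risk :: "nat \<Rightarrow> real \<Rightarrow> (nat \<Rightarrow> real) set \<Rightarrow> ennreal" where
  "lse_risk n \<sigma> K = (SUP \<mu>\<in>K. \<integral>\<^sup>+ \<xi>. ennreal ((edist n (lse n K (\<lambda>i. if i < n then \<mu> i + \<xi> i else 0)) \<mu>)\<^sup>2) \<partial>gauss n \<sigma>)"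

end

theory Submission
  imports Defs
begin

definition ssq :: "nat \<Rightarrow> (nat \<Rightarrow> real) \<Rightarrow> (nat \<Rightarrow> real) \<Rightarrow> real" where
  "ssq n x y = (\<Sum>i<n. (x i - y i)\<^sup>2)"

lemma ssq_nonneg: "0 \<le> ssq n x y" unfolding ssq_def by (auto intro: sum_nonneg)

lemma edist_ssq: "edist n x y = sqrt (ssq n x y)"
  unfolding edist_def enorm_def ssq_def by simp

lemma edist_sq: "(edist n x y)\<^sup>2 = ssq n x y"
  by (simp add: edist_ssq ssq_nonneg)

lemma edist_nonneg: "0 \<le> edist n x y" by (simp add: edist_ssq ssq_nonneg)

lemma ssq_sym: "ssq n x y = ssq n y x"
  unfolding ssq_def by (auto intro!: sum.cong simp: power2_commute)

lemma edist_sym: "edist n x y = edist n y x"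
  by (simp add: edist_ssq ssq_sym)

lemma edist_self[simp]: "edist n x x = 0"
  by (simp add: edist_ssq ssq_def)

lemma edist_triangle: "edist n x z \<le> edist n x y + edist n y z"
proof -
  have "edist n x z = L2_set (\<lambda>i. (x i - y i) + (y i - z i)) {..<n}"
    unfolding edist_def enorm_def L2_set_def by simp
  also have "\<dots> \<le> L2_set (\<lambda>i. x i - y i) {..<n} + L2_set (\<lambda>i. y i - z i) {..<n}"
    by (rule L2_set_triangle_ineq)
  also have "\<dots> = edist n x y + edist n y z"
    unfolding edist_def enorm_def L2_set_def by simp
  finally show ?thesis .
qed

lemma coord_le_edist: "i < n \<Longrightarrow> \<bar>x i - y i\<bar> \<le> edist n x y"
proof -
  assume i: "i < n"
  have "(x i - y i)\<^sup>2 \<le> ssq n x y" unfolding ssq_def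
    using i by (intro member_le_sum) auto
  then have "sqrt ((x i - y i)\<^sup>2) \<le> sqrt (ssq n x y)" by (rule real_sqrt_le_mono)
  then show ?thesis by (simp add: edist_ssq)
qed

lemma coord_le_enorm: "i < n \<Longrightarrow> \<bar>x i\<bar> \<le> enorm n x"
  using coord_le_edist[of i n x "\<lambda>_. 0"] by (simp add: edist_def)

lemma enorm_edist0: "enorm n x = edist n x (\<lambda>_. 0)" by (simp add: edist_def)

lemma ssq_zero_eq: "x \<in> vecs n \<Longrightarrow> y \<in> vecs n \<Longrightarrow> ssq n x y = 0 \<Longrightarrow> x = y"
proof (rule ext)
  fix i assume x: "x \<in> vecs n" and y: "y \<in> vecs n" and s: "ssq n x y = 0"
  show "x i = y i"
  proof (cases "i < n")
    case True
    have "\<forall>j\<in>{..<n}. (x j - y j)\<^sup>2 = 0"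
      using s unfolding ssq_def by (subst sum_nonneg_eq_0_iff[symmetric]) auto
    then show ?thesis using True by auto
  next
    case False then show ?thesis using x y by (auto simp: vecs_def)
  qed
qed

lemma edist_bounded:
  assumes "bounded_vec n K" shows "\<exists>R. \<forall>x\<in>K. \<forall>y\<in>K. edist n x y \<le> R"
proof -
  obtain R where R: "\<forall>x\<in>K. enorm n x \<le> R" using assms unfolding bounded_vec_def by blast
  have "edist n x y \<le> R + R" if "x \<in> K" "y \<in> K" for x y
  proof -
    have "edist n x y \<le> edist n x (\<lambda>_. 0) + edist n (\<lambda>_. 0) y" by (rule edist_triangle)
    also have "\<dots> = enorm n x + enorm n y" by (simp add: enorm_edist0 edist_sym)
    moreover have "enorm n x \<le> R" "enorm n y \<le> R" using R that by auto
    ultimately show ?thesis by linarith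
  qed
  then show ?thesis by blast
qed

lemma diam_ge:
  assumes "bounded_vec n K" "x \<in> K" "y \<in> K" shows "edist n x y \<le> diam_vec n K"
proof -
  obtain R where R: "\<forall>x\<in>K. \<forall>y\<in>K. edist n x y \<le> R" using edist_bounded[OF assms(1)] by blast
  show ?thesis unfolding diam_vec_def
    by (rule cSup_upper) (use assms R in \<open>auto simp: bdd_above_def\<close>)
qed

lemma diam_nonneg:
  assumes "bounded_vec n K" "K \<noteq> {}" shows "0 \<le> diam_vec n K"
  using assms diam_ge[OF assms(1)] edist_self by (metis ex_in_conv)

lemma midpoint_identity:
  "ssq n Y (\<lambda>i. (1 - 1/2) * a i + 1/2 * b i) = (ssq n Y a + ssq n Y b) / 2 - ssq n a b / 4"
proof -
  have "ssq n Y (\<lambda>i. (1 - 1/2) * a i + 1/2 * b i) =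
    (\<Sum>i<n. (Y i - a i)\<^sup>2 / 2 + (Y i - b i)\<^sup>2 / 2 - (a i - b i)\<^sup>2 / 4)"
    unfolding ssq_def by (intro sum.cong) (auto simp: power2_eq_square field_simps)
  also have "\<dots> = (ssq n Y a + ssq n Y b) / 2 - ssq n a b / 4"
    unfolding ssq_def by (simp add: sum_subtractf sum.distrib flip: sum_divide_distrib)
  finally show ?thesis .
qed

lemma convex_expansion:
  "ssq n Y (\<lambda>i. (1 - t) * P i + t * m i) = ssq n Y P - 2 * t * (\<Sum>i<n. (Y i - P i) * (m i - P i)) + t\<^sup>2 * ssq n m P"
proof -
  have "ssq n Y (\<lambda>i. (1 - t) * P i + t * m i) =
    (\<Sum>i<n. (Y i - P i)\<^sup>2 - 2 * t * ((Y i - P i) * (m i - P i)) + t\<^sup>2 * (m i - P i)\<^sup>2)"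
    unfolding ssq_def by (intro sum.cong) (auto simp: power2_eq_square field_simps)
  also have "\<dots> = ssq n Y P - 2 * t * (\<Sum>i<n. (Y i - P i) * (m i - P i)) + t\<^sup>2 * ssq n m P"
    unfolding ssq_def by (simp add: sum_subtractf sum.distrib sum_distrib_left)
  finally show ?thesis .
qed

lemma pyth_expansion:
  "ssq n Y m = ssq n Y P + ssq n P m - 2 * (\<Sum>i<n. (Y i - P i) * (m i - P i))"
proof -
  have "ssq n Y m = (\<Sum>i<n. (Y i - P i)\<^sup>2 + (P i - m i)\<^sup>2 - 2 * ((Y i - P i) * (m i - P i)))"
    unfolding ssq_def by (intro sum.cong) (auto simp: power2_eq_square field_simps)
  also have "\<dots> = ssq n Y P + ssq n P m - 2 * (\<Sum>i<n. (Y i - P i) * (m i - P i))"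
    unfolding ssq_def by (simp add: sum_subtractf sum.distrib sum_distrib_left)
  finally show ?thesis .
qed



lemma proj_exists:
  assumes ne: "K \<noteq> {}" and cl: "closed_vec n K" and bd: "bounded_vec n K"
  shows "\<exists>P\<in>K. \<forall>z\<in>K. edist n Y P \<le> edist n Y z"
proof -
  define m where "m = Inf (edist n Y ` K)"
  have bb: "bdd_below (edist n Y ` K)" by (rule bdd_belowI[of _ 0]) (auto simp: edist_nonneg)
  have mle: "m \<le> edist n Y z" if "z \<in> K" for z
    unfolding m_def using bb that by (auto intro: cInf_lower)
  have "\<exists>z\<in>K. edist n Y z < m + inverse (real (Suc k))" for k
  proof -
    have "m < m + inverse (real (Suc k))" by simp
    then obtain w where "w \<in> edist n Y ` K" "w < m + inverse (real (Suc k))"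
      using cInf_lessD[of "edist n Y ` K"] ne unfolding m_def by blast
    then show ?thesis by blast
  qed
  then have "\<exists>f. \<forall>k. f k \<in> K \<and> edist n Y (f k) < m + inverse (real (Suc k))"
    by (intro choice) blast
  then obtain f where fK: "\<And>k. f k \<in> K" and fm: "\<And>k. edist n Y (f k) < m + inverse (real (Suc k))"
    by blast
  obtain R where R: "\<forall>x\<in>K. enorm n x \<le> R" using bd unfolding bounded_vec_def by blast
  have bproj: "bounded ((\<lambda>x. x i) ` range f)" if "i \<in> {..<n}" for i
  proof -
    have "\<forall>y\<in>(\<lambda>x. x i) ` range f. norm y \<le> R"
    proof
      fix y assume "y \<in> (\<lambda>x. x i) ` range f"
      then obtain k where y: "y = f k i" by auto
      have "\<bar>f k i\<bar> \<le> enorm n (f k)" using that coord_le_enorm[of i n] by auto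
      also have "\<dots> \<le> R" using R fK by blast
      finally show "norm y \<le> R" using y by simp
    qed
    then show ?thesis unfolding bounded_iff by blast
  qed
  obtain l r where r: "strict_mono r" and lr: "\<forall>e>0. eventually (\<lambda>k. \<forall>i\<in>{..<n}. dist (f (r k) i) (l i) < e) sequentially"
    using compact_lemma_general[where basis="{..<n}" and f=f and proj="\<lambda>x i. x i" and unproj="\<lambda>x. x", OF _ bproj] by auto
  define x where "x = (\<lambda>i. if i < n then l i else (0::real))"
  have xv: "x \<in> vecs n" by (auto simp: x_def vecs_def)
  have ci: "(\<lambda>k. f (r k) i) \<longlonglongrightarrow> x i" if "i \<in> {..<n}" for i
  proof -
    have "\<forall>e>0. eventually (\<lambda>k. dist (f (r k) i) (l i) < e) sequentially"
    proof (intro allI impI)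
      fix e :: real assume "e > 0"
      then have "eventually (\<lambda>k. \<forall>i\<in>{..<n}. dist (f (r k) i) (l i) < e) sequentially" using lr by blast
      then show "eventually (\<lambda>k. dist (f (r k) i) (l i) < e) sequentially"
        by (rule eventually_mono) (use that in auto)
    qed
    then show ?thesis using that unfolding x_def by (simp add: tendsto_iff)
  qed
  have t0: "(\<lambda>k. edist n (f (r k)) x) \<longlonglongrightarrow> 0"
  proof -
    have "(\<lambda>k. sqrt (\<Sum>i<n. (f (r k) i - x i)\<^sup>2)) \<longlonglongrightarrow> sqrt (\<Sum>i<n. (x i - x i)\<^sup>2)"
      by (intro tendsto_intros ci) auto
    then show ?thesis by (simp add: edist_def enorm_def)
  qed
  have cl': "\<And>s x. (\<forall>k. s k \<in> K) \<Longrightarrow> x \<in> vecs n \<Longrightarrow> (\<lambda>k. edist n (s k) x) \<longlonglongrightarrow> 0 \<Longrightarrow> x \<in> K"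
    using cl unfolding closed_vec_def by blast
  have xK: "x \<in> K" by (rule cl'[of "\<lambda>k. f (r k)"]) (use fK xv t0 in auto)
  have "edist n Y x \<le> m"
  proof (rule LIMSEQ_le_const[of "\<lambda>k. m + inverse (real (Suc k)) + edist n (f (r k)) x"])
    have "(\<lambda>k. m + inverse (real (Suc k)) + edist n (f (r k)) x) \<longlonglongrightarrow> m + 0 + 0"
      by (intro tendsto_intros LIMSEQ_inverse_real_of_nat t0)
    then show "(\<lambda>k. m + inverse (real (Suc k)) + edist n (f (r k)) x) \<longlonglongrightarrow> m" by simp
    show "\<exists>N. \<forall>k\<ge>N. edist n Y x \<le> m + inverse (real (Suc k)) + edist n (f (r k)) x"
    proof (intro exI allI impI)
      fix k :: nat
      have "edist n Y x \<le> edist n Y (f (r k)) + edist n (f (r k)) x" by (rule edist_triangle)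
      moreover have "edist n Y (f (r k)) < m + inverse (real (Suc (r k)))" by (rule fm)
      moreover have "inverse (real (Suc (r k))) \<le> inverse (real (Suc k))"
        using seq_suble[OF r, of k] by (simp add: field_simps)
      ultimately show "edist n Y x \<le> m + inverse (real (Suc k)) + edist n (f (r k)) x" by linarith
    qed
  qed
  then show ?thesis
  proof (intro bexI[of _ x] ballI)
    fix z assume "z \<in> K" "edist n Y x \<le> m"
    then show "edist n Y x \<le> edist n Y z" using mle[of z] by linarith
  qed (rule xK)
qed

lemma aux_half: "(x::real) = y \<Longrightarrow> x \<le> (x+y)/2 - z/4 \<Longrightarrow> z \<le> 0" by (simp add: field_simps)

lemma proj_unique:
  assumes cv: "convex_vec n K" and a: "a \<in> K" and b: "b \<in> K"
    and ma: "\<forall>z\<in>K. ssq n Y a \<le> ssq n Y z" and mb: "\<forall>z\<in>K. ssq n Y b \<le> ssq n Y z"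
  shows "a = b"
proof -
  have "\<forall>t::real. 0 \<le> t \<and> t \<le> 1 \<longrightarrow> (\<lambda>i. (1 - t) * a i + t * b i) \<in> K"
    using cv a b unfolding convex_vec_def by blast
  then have cK: "(\<lambda>i. (1 - 1/2) * a i + 1/2 * b i) \<in> K" by (rule allE[where x="1/2"]) simp
  have h1: "ssq n Y a \<le> ssq n Y (\<lambda>i. (1 - 1/2) * a i + 1/2 * b i)" using ma cK by blast
  have h2: "ssq n Y a = ssq n Y b" using ma mb a b by (meson antisym)
  have h3: "ssq n Y a \<le> (ssq n Y a + ssq n Y b) / 2 - ssq n a b / 4"
    using h1 midpoint_identity[of n Y a b] by simp
  have "ssq n a b \<le> 0" using aux_half[OF h2 h3] .
  then have "ssq n a b = 0" using ssq_nonneg[of n a b] by linarith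
  moreover have "K \<subseteq> vecs n" using cv unfolding convex_vec_def by blast
  ultimately show ?thesis using ssq_zero_eq a b by blast
qed

lemma lse_char:
  assumes ne: "K \<noteq> {}" and cl: "closed_vec n K" and bd: "bounded_vec n K" and cv: "convex_vec n K"
  shows "lse n K Y \<in> K \<and> (\<forall>z\<in>K. ssq n Y (lse n K Y) \<le> ssq n Y z)"
proof -
  obtain P where P: "P \<in> K" "\<forall>z\<in>K. edist n Y P \<le> edist n Y z" using proj_exists[OF ne cl bd] by blast
  have Pm: "\<forall>z\<in>K. ssq n Y P \<le> ssq n Y z"
  proof
    fix z assume "z \<in> K"
    then have "edist n Y P \<le> edist n Y z" using P by blast
    then have "(edist n Y P)\<^sup>2 \<le> (edist n Y z)\<^sup>2" by (intro power_mono edist_nonneg)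
    then show "ssq n Y P \<le> ssq n Y z" by (simp add: edist_sq)
  qed
  have ex1: "\<exists>!\<nu>. \<nu> \<in> K \<and> (\<forall>\<nu>'\<in>K. (edist n Y \<nu>)\<^sup>2 \<le> (edist n Y \<nu>')\<^sup>2)"
    using P(1) Pm proj_unique[OF cv] unfolding edist_sq by blast
  show ?thesis using theI'[OF ex1] unfolding lse_def edist_sq by blast
qed

lemma lse_nonexp:
  assumes ne: "K \<noteq> {}" and cl: "closed_vec n K" and bd: "bounded_vec n K" and cv: "convex_vec n K"
    and mu: "\<mu> \<in> K"
  shows "ssq n (lse n K Y) \<mu> \<le> ssq n Y \<mu>"
proof -
  define P where "P = lse n K Y"
  have P: "P \<in> K" "\<forall>z\<in>K. ssq n Y P \<le> ssq n Y z" using lse_char[OF ne cl bd cv] unfolding P_def by auto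
  define I where "I = (\<Sum>i<n. (Y i - P i) * (\<mu> i - P i))"
  define Q where "Q = ssq n \<mu> P"
  have key: "2 * t * I \<le> t\<^sup>2 * Q" if "0 \<le> t" "t \<le> 1" for t
  proof -
    have "(\<lambda>i. (1 - t) * P i + t * \<mu> i) \<in> K" using cv P(1) mu that unfolding convex_vec_def by auto
    then have "ssq n Y P \<le> ssq n Y (\<lambda>i. (1 - t) * P i + t * \<mu> i)" using P(2) by blast
    then show ?thesis unfolding convex_expansion I_def Q_def by linarith
  qed
  have Q0: "0 \<le> Q" unfolding Q_def by (rule ssq_nonneg)
  have "I \<le> 0"
  proof (rule ccontr)
    assume "\<not> I \<le> 0" then have Ip: "I > 0" by simp
    show False
    proof (cases "Q \<le> I")
      case True
      have "2 * 1 * I \<le> 1\<^sup>2 * Q" by (rule key) auto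
      then show False using True Ip by simp
    next
      case False
      then have Qp: "Q > 0" using Ip by simp
      have t: "0 \<le> I / Q" "I / Q \<le> 1" using False Ip Qp by auto
      have "2 * (I / Q) * I \<le> (I / Q)\<^sup>2 * Q" by (rule key[OF t])
      also have "\<dots> = (I / Q) * I" using Qp by (simp add: power2_eq_square)
      finally have "(I / Q) * I \<le> 0" by simp
      moreover have "(I / Q) * I > 0" using Ip Qp by simp
      ultimately show False by simp
    qed
  qed
  then show ?thesis unfolding P_def[symmetric] using pyth_expansion[of n Y \<mu> P] ssq_nonneg[of n Y P]
    unfolding I_def by linarith
qed



lemma gauss_prob: "\<sigma> > 0 \<Longrightarrow> prob_space (gauss n \<sigma>)"
  unfolding gauss_def by (intro prob_space_PiM prob_space_normal_density)

lemma gauss_coord: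
  assumes s: "\<sigma> > 0" and i: "i < n"
  shows "(\<integral>\<^sup>+ \<xi>. ennreal ((\<xi> i)\<^sup>2) \<partial>gauss n \<sigma>) = ennreal (\<sigma>\<^sup>2)"
proof -
  let ?M = "density lborel (normal_density 0 \<sigma>)"
  have d: "distr (gauss n \<sigma>) ?M (\<lambda>\<omega>. \<omega> i) = ?M"
    unfolding gauss_def using i s by (intro distr_PiM_component prob_space_normal_density) auto
  have "(\<integral>\<^sup>+ \<xi>. ennreal ((\<xi> i)\<^sup>2) \<partial>gauss n \<sigma>) = (\<integral>\<^sup>+ x. ennreal (x\<^sup>2) \<partial>distr (gauss n \<sigma>) ?M (\<lambda>\<omega>. \<omega> i))"
    by (subst nn_integral_distr) (auto simp: gauss_def i)
  also have "\<dots> = (\<integral>\<^sup>+ x. ennreal (x\<^sup>2) \<partial>?M)" by (simp add: d)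
  also have "\<dots> = (\<integral>\<^sup>+ x. ennreal (normal_density 0 \<sigma> x * x ^ (2*1)) \<partial>lborel)"
    by (subst nn_integral_density) (auto simp: ennreal_mult'[symmetric])
  also have "\<dots> = ennreal (\<sigma>\<^sup>2)"
  proof -
    have h: "has_bochner_integral lborel (\<lambda>x. normal_density 0 \<sigma> x * (x - 0) ^ (2 * 1)) (fact (2 * 1) / ((2 / \<sigma>\<^sup>2)^1 * fact 1))"
      using normal_moment_even[OF s] by blast
    have "integrable lborel (\<lambda>x. normal_density 0 \<sigma> x * x ^ (2 * 1))"
      using h[unfolded has_bochner_integral_iff] by simp
    moreover have "integral\<^sup>L lborel (\<lambda>x. normal_density 0 \<sigma> x * x ^ (2 * 1)) = \<sigma>\<^sup>2"
      using has_bochner_integral_integral_eq[OF h] s by simp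
    ultimately show ?thesis
      by (subst nn_integral_eq_integral) auto
  qed
  finally show ?thesis .
qed

lemma gauss_sum:
  assumes s: "\<sigma> > 0"
  shows "(\<integral>\<^sup>+ \<xi>. ennreal (\<Sum>i<n. (\<xi> i)\<^sup>2) \<partial>gauss n \<sigma>) = ennreal (real n * \<sigma>\<^sup>2)"
proof -
  have "(\<integral>\<^sup>+ \<xi>. ennreal (\<Sum>i<n. (\<xi> i)\<^sup>2) \<partial>gauss n \<sigma>) = (\<integral>\<^sup>+ \<xi>. (\<Sum>i<n. ennreal ((\<xi> i)\<^sup>2)) \<partial>gauss n \<sigma>)"
    by (simp add: sum_ennreal)
  also have "\<dots> = (\<Sum>i<n. \<integral>\<^sup>+ \<xi>. ennreal ((\<xi> i)\<^sup>2) \<partial>gauss n \<sigma>)"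
    by (rule nn_integral_sum) (auto simp: gauss_def)
  also have "\<dots> = (\<Sum>i<n. ennreal (\<sigma>\<^sup>2))" using gauss_coord[OF s] by simp
  also have "\<dots> = ennreal (real n * \<sigma>\<^sup>2)" by (simp add: ennreal_mult' ennreal_of_nat_eq_real_of_nat)
  finally show ?thesis .
qed

lemma risk_le_n:
  assumes ne: "K \<noteq> {}" and cl: "closed_vec n K" and bd: "bounded_vec n K" and cv: "convex_vec n K"
    and s: "\<sigma> > 0"
  shows "lse_risk n \<sigma> K \<le> ennreal (real n * \<sigma>\<^sup>2)"
  unfolding lse_risk_def
proof (rule SUP_least)
  fix \<mu> assume mu: "\<mu> \<in> K"
  have "(\<integral>\<^sup>+ \<xi>. ennreal ((edist n (lse n K (\<lambda>i. if i < n then \<mu> i + \<xi> i else 0)) \<mu>)\<^sup>2) \<partial>gauss n \<sigma>)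
      \<le> (\<integral>\<^sup>+ \<xi>. ennreal (\<Sum>i<n. (\<xi> i)\<^sup>2) \<partial>gauss n \<sigma>)"
  proof (rule nn_integral_mono)
    fix \<xi> :: "nat \<Rightarrow> real"
    let ?Y = "\<lambda>i. if i < n then \<mu> i + \<xi> i else 0"
    have "(edist n (lse n K ?Y) \<mu>)\<^sup>2 = ssq n (lse n K ?Y) \<mu>" by (rule edist_sq)
    also have "\<dots> \<le> ssq n ?Y \<mu>" by (rule lse_nonexp[OF ne cl bd cv mu])
    also have "\<dots> = (\<Sum>i<n. (\<xi> i)\<^sup>2)" unfolding ssq_def by (intro sum.cong) auto
    finally show "ennreal ((edist n (lse n K ?Y) \<mu>)\<^sup>2) \<le> ennreal (\<Sum>i<n. (\<xi> i)\<^sup>2)"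
      by (rule ennreal_leI)
  qed
  also have "\<dots> = ennreal (real n * \<sigma>\<^sup>2)" by (rule gauss_sum[OF s])
  finally show "(\<integral>\<^sup>+ \<xi>. ennreal ((edist n (lse n K (\<lambda>i. if i < n then \<mu> i + \<xi> i else 0)) \<mu>)\<^sup>2) \<partial>gauss n \<sigma>)
      \<le> ennreal (real n * \<sigma>\<^sup>2)" .
qed

lemma risk_le_d:
  assumes ne: "K \<noteq> {}" and cl: "closed_vec n K" and bd: "bounded_vec n K" and cv: "convex_vec n K"
    and s: "\<sigma> > 0"
  shows "lse_risk n \<sigma> K \<le> ennreal ((diam_vec n K)\<^sup>2)"
  unfolding lse_risk_def
proof (rule SUP_least)
  fix \<mu> assume mu: "\<mu> \<in> K"
  interpret prob_space "gauss n \<sigma>" by (rule gauss_prob[OF s])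
  have "(\<integral>\<^sup>+ \<xi>. ennreal ((edist n (lse n K (\<lambda>i. if i < n then \<mu> i + \<xi> i else 0)) \<mu>)\<^sup>2) \<partial>gauss n \<sigma>)
      \<le> (\<integral>\<^sup>+ \<xi>. ennreal ((diam_vec n K)\<^sup>2) \<partial>gauss n \<sigma>)"
  proof (rule nn_integral_mono)
    fix \<xi> :: "nat \<Rightarrow> real"
    let ?Y = "\<lambda>i. if i < n then \<mu> i + \<xi> i else 0"
    have "lse n K ?Y \<in> K" using lse_char[OF ne cl bd cv] by blast
    then have "edist n (lse n K ?Y) \<mu> \<le> diam_vec n K" using diam_ge[OF bd _ mu] by blast
    then have "(edist n (lse n K ?Y) \<mu>)\<^sup>2 \<le> (diam_vec n K)\<^sup>2" by (intro power_mono edist_nonneg)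
    then show "ennreal ((edist n (lse n K ?Y) \<mu>)\<^sup>2) \<le> ennreal ((diam_vec n K)\<^sup>2)"
      by (rule ennreal_leI)
  qed
  also have "\<dots> = ennreal ((diam_vec n K)\<^sup>2)" by (simp add: emeasure_space_1)
  finally show "(\<integral>\<^sup>+ \<xi>. ennreal ((edist n (lse n K (\<lambda>i. if i < n then \<mu> i + \<xi> i else 0)) \<mu>)\<^sup>2) \<partial>gauss n \<sigma>)
      \<le> ennreal ((diam_vec n K)\<^sup>2)" .
qed



definition sdiff :: "nat set \<Rightarrow> nat set \<Rightarrow> nat set" where
  "sdiff A B = (A - B) \<union> (B - A)"

lemma sdiff_sym: "sdiff A B = sdiff B A" unfolding sdiff_def by blast
lemma sdiff_self[simp]: "sdiff A A = {}" unfolding sdiff_def by blast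
lemma sdiff_sub: "A \<subseteq> S \<Longrightarrow> B \<subseteq> S \<Longrightarrow> sdiff A B \<subseteq> S" unfolding sdiff_def by blast
lemma sdiff_inv: "sdiff (sdiff A B) B = A" unfolding sdiff_def by blast

lemma sum_pow_card:
  fixes l :: real
  shows "(\<Sum>X\<in>Pow {..<n}. l ^ card X) = (l + 1) ^ n"
proof -
  have "(\<Prod>x\<in>{..<n}. l + 1) = (\<Sum>X\<in>Pow {..<n}. (\<Prod>x\<in>X. l) * (\<Prod>x\<in>{..<n}-X. 1))"
    by (rule prod_add) simp
  then show ?thesis by simp
qed

definition Vset :: "nat \<Rightarrow> nat set set" where
  "Vset n = {D \<in> Pow {..<n}. 4 * card D \<le> n}"

lemma Vset_bound:
  "real (card (Vset n)) * exp (- (real n / 4) * ln 3) \<le> (4/3) ^ n"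
proof -
  have fin: "finite (Vset n)" unfolding Vset_def by simp
  have "real (card (Vset n)) * exp (- (real n / 4) * ln 3) = (\<Sum>D\<in>Vset n. exp (- (real n / 4) * ln 3))"
    by simp
  also have "\<dots> \<le> (\<Sum>D\<in>Vset n. (1/3) ^ card D)"
  proof (rule sum_mono)
    fix D assume D: "D \<in> Vset n"
    have "(1/3::real) ^ card D = exp (real (card D) * ln (1/3))"
      by (simp add: exp_of_nat_mult)
    also have "\<dots> = exp (- (real (card D) * ln 3))" by (simp add: ln_div)
    finally have e: "(1/3::real) ^ card D = exp (- (real (card D) * ln 3))" .
    have "real (card D) \<le> real n / 4" using D unfolding Vset_def by auto
    moreover have "ln 3 > (0::real)" by simp
    ultimately have "- (real n / 4) * ln 3 \<le> - (real (card D) * ln 3)"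
      by (simp add: mult_right_mono)
    then show "exp (- (real n / 4) * ln 3) \<le> (1/3) ^ card D" unfolding e by simp
  qed
  also have "\<dots> \<le> (\<Sum>D\<in>Pow {..<n}. (1/3) ^ card D)"
    by (rule sum_mono2) (auto simp: Vset_def)
  also have "\<dots> = (4/3) ^ n" by (simp add: sum_pow_card)
  finally show ?thesis .
qed

definition good :: "nat \<Rightarrow> nat set set \<Rightarrow> bool" where
  "good n C \<longleftrightarrow> C \<subseteq> Pow {..<n} \<and> (\<forall>A\<in>C. \<forall>B\<in>C. A \<noteq> B \<longrightarrow> n < 4 * card (sdiff A B))"

lemma GV:
  "\<exists>C. good n C \<and> 2 ^ n \<le> card C * card (Vset n)"
proof -
  define F where "F = {C. good n C}"
  have finF: "finite F" unfolding F_def good_def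
    by (rule finite_subset[of _ "Pow (Pow {..<n})"]) auto
  have neF: "{} \<in> F" unfolding F_def good_def by auto
  define m where "m = Max (card ` F)"
  have "m \<in> card ` F" unfolding m_def using finF neF by (intro Max_in) auto
  then obtain C where CF: "C \<in> F" and Cm: "card C = m" by blast
  have maxC: "card C' \<le> card C" if "C' \<in> F" for C'
    unfolding Cm m_def using finF that by (intro Max_ge) auto
  have gC: "good n C" using CF unfolding F_def by simp
  have finC: "finite C" using gC unfolding good_def by (meson finite_Pow_iff finite_lessThan finite_subset)
  have cover: "\<exists>B\<in>C. 4 * card (sdiff A B) \<le> n" if A: "A \<in> Pow {..<n}" for A
  proof (cases "A \<in> C")
    case True then show ?thesis by (intro bexI[of _ A]) auto
  next
    case False
    show ?thesis
    proof (rule ccontr)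
      assume "\<not> ?thesis"
      then have far: "\<forall>B\<in>C. n < 4 * card (sdiff A B)" by auto
      have "good n (insert A C)"
        unfolding good_def
      proof (intro conjI ballI impI)
        show "insert A C \<subseteq> Pow {..<n}" using gC A unfolding good_def by auto
      next
        fix X Y assume X: "X \<in> insert A C" and Y: "Y \<in> insert A C" and XY: "X \<noteq> Y"
        show "n < 4 * card (sdiff X Y)"
        proof (cases "X = A")
          case True
          then have "Y \<in> C" using Y XY by auto
          then show ?thesis using far True by auto
        next
          case XA: False
          then have XC: "X \<in> C" using X by auto
          show ?thesis
          proof (cases "Y = A")
            case True then show ?thesis using far XC sdiff_sym[of X Y] by auto
          next
            case False
            then have "Y \<in> C" using Y by auto
            then show ?thesis using gC XC XY unfolding good_def by auto
          qed
        qed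
      qed
      then have "insert A C \<in> F" unfolding F_def by simp
      then have "card (insert A C) \<le> card C" by (rule maxC)
      then show False using False finC by simp
    qed
  qed
  define H where "H B = {A \<in> Pow {..<n}. 4 * card (sdiff A B) \<le> n}" for B
  have cardH: "card (H B) = card (Vset n)" if B: "B \<in> C" for B
  proof -
    have Bs: "B \<subseteq> {..<n}" using gC B unfolding good_def by auto
    have "bij_betw (\<lambda>A. sdiff A B) (H B) (Vset n)"
    proof (rule bij_betw_byWitness[where f'="\<lambda>D. sdiff D B"])
      show "\<forall>a\<in>H B. sdiff (sdiff a B) B = a" by (simp add: sdiff_inv)
      show "\<forall>a'\<in>Vset n. sdiff (sdiff a' B) B = a'" by (simp add: sdiff_inv)
      show "(\<lambda>A. sdiff A B) ` H B \<subseteq> Vset n"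
        unfolding H_def Vset_def using Bs by (auto simp: sdiff_def)
      show "(\<lambda>D. sdiff D B) ` Vset n \<subseteq> H B"
      proof clarify
        fix D assume D: "D \<in> Vset n"
        then have "D \<subseteq> {..<n}" unfolding Vset_def by auto
        then have "sdiff D B \<subseteq> {..<n}" using Bs by (rule sdiff_sub)
        then show "sdiff D B \<in> H B" using D unfolding H_def Vset_def by (simp add: sdiff_inv)
      qed
    qed
    then show ?thesis by (rule bij_betw_same_card)
  qed
  have "Pow {..<n} \<subseteq> (\<Union>B\<in>C. H B)" using cover unfolding H_def by auto
  then have "card (Pow {..<n}) \<le> card (\<Union>B\<in>C. H B)"
    by (intro card_mono) (auto simp: H_def finC)
  also have "\<dots> \<le> (\<Sum>B\<in>C. card (H B))" by (rule card_UN_le[OF finC])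
  also have "\<dots> = (\<Sum>B\<in>C. card (Vset n))" using cardH by simp
  also have "\<dots> = card C * card (Vset n)" by simp
  finally have "2 ^ n \<le> card C * card (Vset n)" by (simp add: card_Pow)
  then show ?thesis using gC by blast
qed

lemma ln_bound: "(2::real) / 5 \<le> ln (81 / 48)"
proof -
  have "exp (2/5::real) ^ 5 = exp 2" by (simp flip: exp_of_nat_mult)
  also have "exp (2::real) = exp 1 ^ 2" by (simp flip: exp_of_nat_mult)
  also have "\<dots> \<le> 3 ^ 2" by (intro power_mono exp_le) auto
  also have "(3::real) ^ 2 < (81/48) ^ 5" by (simp add: power_divide)
  finally have "exp (2/5::real) < 81/48" by (rule power_less_imp_less_base) simp
  then show ?thesis by (subst ln_ge_iff) auto
qed

lemma GV_ln:
  "\<exists>C. good n C \<and> real n / 10 \<le> ln (real (card C))"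
proof -
  obtain C where gC: "good n C" and h: "2 ^ n \<le> card C * card (Vset n)" using GV by blast
  have V: "real (card (Vset n)) * exp (- (real n / 4) * ln 3) \<le> (4/3) ^ n" by (rule Vset_bound)
  have Vpos: "card (Vset n) > 0"
  proof -
    have "{} \<in> Vset n" unfolding Vset_def by auto
    then show ?thesis using card_gt_0_iff unfolding Vset_def by fastforce
  qed
  have Cpos: "card C > 0" using h by (cases "card C = 0") auto
  have h': "(2::real) ^ n \<le> real (card C) * real (card (Vset n))"
    using h by (metis of_nat_le_iff of_nat_mult of_nat_numeral of_nat_power)
  have "ln ((2::real) ^ n) \<le> ln (real (card C) * real (card (Vset n)))"
    using h' by (intro ln_mono) auto
  then have a: "real n * ln 2 \<le> ln (real (card C)) + ln (real (card (Vset n)))"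
    using Cpos Vpos by (simp add: ln_realpow ln_mult)
  have "ln (real (card (Vset n)) * exp (- (real n / 4) * ln 3)) \<le> ln ((4/3) ^ n)"
    using V Vpos by (intro ln_mono) auto
  then have b: "ln (real (card (Vset n))) - (real n / 4) * ln 3 \<le> real n * ln (4/3)"
    using Vpos by (simp add: ln_mult ln_realpow)
  have c: "ln (81/48::real) = 3 * ln 3 - 4 * ln 2"
  proof -
    have e: "(81/48::real) = 3^3 / 2^4" by simp
    have "ln (81/48::real) = ln (3^3) - ln (2^4)" unfolding e by (rule ln_divide_pos) auto
    also have "\<dots> = 3 * ln 3 - 4 * ln 2" using ln_realpow[of 3 3] ln_realpow[of 2 4] by simp
    finally show ?thesis .
  qed
  have d: "ln (4/3::real) = 2 * ln 2 - ln 3"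
  proof -
    have e: "(4/3::real) = 2^2 / 3" by simp
    have "ln (4/3::real) = ln (2^2) - ln 3" unfolding e by (rule ln_divide_pos) auto
    also have "\<dots> = 2 * ln 2 - ln 3" using ln_realpow[of 2 2] by simp
    finally show ?thesis .
  qed
  have f1: "real n * (2/5) \<le> real n * ln (81/48)" using ln_bound by (intro mult_left_mono) auto
  have f2: "real n * ln (81/48) = 3 * (real n * ln 3) - 4 * (real n * ln 2)"
    unfolding c by (simp add: algebra_simps)
  have f3: "real n * ln (4/3) = 2 * (real n * ln 2) - real n * ln 3"
    unfolding d by (simp add: algebra_simps)
  have f4: "(real n / 4) * ln 3 = (real n * ln 3) / 4" by simp
  have "real n / 10 \<le> ln (real (card C))"
    using a b f1 f2 f3 f4 by linarith
  then show ?thesis using gC by blast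
qed



definition epsset :: "nat \<Rightarrow> real \<Rightarrow> (nat \<Rightarrow> real) set \<Rightarrow> real \<Rightarrow> real set" where
  "epsset n cstar K \<sigma> = {\<epsilon>. 0 \<le> \<epsilon> \<and>
      (Mloc n cstar K \<epsilon> = \<infinity> \<or> \<epsilon>\<^sup>2 / \<sigma>\<^sup>2 \<le> ln (real (the_enat (Mloc n cstar K \<epsilon>))))}"

lemma eps_star_alt: "eps_star n cstar K \<sigma> = Sup (epsset n cstar K \<sigma>)"
  unfolding eps_star_def epsset_def ..

lemma packing_ge:
  assumes "finite S" "S \<subseteq> T" "\<forall>x\<in>S. \<forall>y\<in>S. x \<noteq> y \<longrightarrow> edist n x y > \<eta>"
  shows "enat (card S) \<le> packing n \<eta> T"
  unfolding packing_def by (rule Sup_upper) (use assms in blast)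

lemma Mloc_ge:
  assumes "\<theta> \<in> K" "finite S" "S \<subseteq> eball n \<theta> \<epsilon> \<inter> K" "\<forall>x\<in>S. \<forall>y\<in>S. x \<noteq> y \<longrightarrow> edist n x y > \<epsilon> / cstar"
  shows "enat (card S) \<le> Mloc n cstar K \<epsilon>"
proof -
  have "enat (card S) \<le> packing n (\<epsilon> / cstar) (eball n \<theta> \<epsilon> \<inter> K)"
    by (rule packing_ge) (use assms in auto)
  also have "\<dots> \<le> Mloc n cstar K \<epsilon>" unfolding Mloc_def by (rule SUP_upper) (rule assms(1))
  finally show ?thesis .
qed

lemma in_epsset:
  assumes "0 \<le> \<epsilon>" "enat m \<le> Mloc n cstar K \<epsilon>" "m > 0" "\<epsilon>\<^sup>2 / \<sigma>\<^sup>2 \<le> ln (real m)"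
  shows "\<epsilon> \<in> epsset n cstar K \<sigma>"
proof (cases "Mloc n cstar K \<epsilon> = \<infinity>")
  case True then show ?thesis using assms unfolding epsset_def by auto
next
  case False
  then obtain k where k: "Mloc n cstar K \<epsilon> = enat k" by (cases "Mloc n cstar K \<epsilon>") auto
  then have "m \<le> k" using assms(2) by simp
  then have "ln (real m) \<le> ln (real k)" using assms(3) by simp
  then have "\<epsilon>\<^sup>2 / \<sigma>\<^sup>2 \<le> ln (real k)" using assms(4) by linarith
  then show ?thesis using assms(1) k unfolding epsset_def by simp
qed

lemma epsset_bound:
  assumes ne: "K \<noteq> {}" and bd: "bounded_vec n K" and cs: "cstar > 0" and s: "\<sigma> > 0"
    and e: "\<epsilon> \<in> epsset n cstar K \<sigma>"
  shows "\<epsilon> \<le> cstar * diam_vec n K"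
proof (rule ccontr)
  assume "\<not> ?thesis"
  then have big: "\<epsilon> > cstar * diam_vec n K" by simp
  have d0: "0 \<le> diam_vec n K" by (rule diam_nonneg[OF bd ne])
  then have ep: "\<epsilon> > 0" using big cs by (smt (verit) mult_nonneg_nonneg)
  have dl: "diam_vec n K < \<epsilon> / cstar" using big cs by (simp add: field_simps)
  have "packing n (\<epsilon> / cstar) (eball n \<theta> \<epsilon> \<inter> K) \<le> 1" for \<theta>
    unfolding packing_def
  proof (rule Sup_least, clarify)
    fix S assume S: "finite S" "S \<subseteq> eball n \<theta> \<epsilon> \<inter> K" "\<forall>x\<in>S. \<forall>y\<in>S. x \<noteq> y \<longrightarrow> \<epsilon> / cstar < edist n x y"
    have "\<forall>x\<in>S. \<forall>y\<in>S. x = y"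
    proof (intro ballI, rule ccontr)
      fix x y assume xy: "x \<in> S" "y \<in> S" "x \<noteq> y"
      then have "\<epsilon> / cstar < edist n x y" using S by blast
      moreover have "edist n x y \<le> diam_vec n K" using S xy by (intro diam_ge[OF bd]) auto
      ultimately show False using dl by linarith
    qed
    then have "card S \<le> 1" using card_le_Suc0_iff_eq[OF S(1)] by simp
    then show "enat (card S) \<le> 1" by (simp add: one_enat_def)
  qed
  then have M1: "Mloc n cstar K \<epsilon> \<le> 1" unfolding Mloc_def by (intro SUP_least) auto
  obtain k where k: "Mloc n cstar K \<epsilon> = enat k"
  proof (cases "Mloc n cstar K \<epsilon>")
    case (enat k) then show ?thesis using that by blast
  next
    case infinity then show ?thesis using M1 by (simp add: one_enat_def)
  qed
  with M1 have "k \<le> 1" by (simp add: one_enat_def)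
  then have "ln (real k) \<le> 0" by (cases "k = 0") auto
  moreover have "\<epsilon>\<^sup>2 / \<sigma>\<^sup>2 > 0" using ep s by simp
  ultimately show False using e k unfolding epsset_def by auto
qed

lemma eps_star_ge:
  assumes ne: "K \<noteq> {}" and bd: "bounded_vec n K" and cs: "cstar > 0" and s: "\<sigma> > 0"
    and e: "\<epsilon> \<in> epsset n cstar K \<sigma>"
  shows "\<epsilon> \<le> eps_star n cstar K \<sigma>"
  unfolding eps_star_alt
  by (rule cSup_upper[OF e]) (use epsset_bound[OF ne bd cs s] in \<open>auto simp: bdd_above_def\<close>)

definition cube :: "nat \<Rightarrow> (nat \<Rightarrow> real) \<Rightarrow> real \<Rightarrow> nat set \<Rightarrow> (nat \<Rightarrow> real)" where
  "cube n \<theta> \<delta> A = (\<lambda>i. if i < n then \<theta> i + (if i \<in> A then \<delta> else - \<delta>) else 0)"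

lemma cube_vecs: "cube n \<theta> \<delta> A \<in> vecs n" unfolding cube_def vecs_def by auto

lemma cube_ssq:
  assumes A: "A \<subseteq> {..<n}" and B: "B \<subseteq> {..<n}"
  shows "ssq n (cube n \<theta> \<delta> A) (cube n \<theta> \<delta> B) = 4 * \<delta>\<^sup>2 * real (card (sdiff A B))"
proof -
  have "ssq n (cube n \<theta> \<delta> A) (cube n \<theta> \<delta> B) = (\<Sum>i<n. if i \<in> sdiff A B then 4 * \<delta>\<^sup>2 else 0)"
    unfolding ssq_def cube_def sdiff_def by (intro sum.cong) (auto simp: power2_eq_square)
  also have "\<dots> = (\<Sum>i\<in>{i \<in> {..<n}. i \<in> sdiff A B}. 4 * \<delta>\<^sup>2)"
    by (rule sum.inter_filter[symmetric]) simp
  also have "{i \<in> {..<n}. i \<in> sdiff A B} = sdiff A B" using sdiff_sub[OF A B] by auto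
  finally show ?thesis by simp
qed

lemma cube_center:
  assumes "\<theta> \<in> vecs n"
  shows "ssq n (cube n \<theta> \<delta> A) \<theta> = real n * \<delta>\<^sup>2"
proof -
  have "ssq n (cube n \<theta> \<delta> A) \<theta> = (\<Sum>i<n. \<delta>\<^sup>2)"
    unfolding ssq_def cube_def by (intro sum.cong) auto
  then show ?thesis by simp
qed

lemma small_case:
  assumes n: "n \<ge> 1" and cs: "cstar \<ge> 1" and s: "\<sigma> > 0" and x: "x \<in> vecs n"
    and ball: "eball n x \<epsilon> \<subseteq> K" and ed: "\<epsilon> = \<sigma> * sqrt (real n / 10)"
  shows "\<epsilon> \<in> epsset n cstar K \<sigma>"
proof -
  obtain C where gC: "good n C" and lnC: "real n / 10 \<le> ln (real (card C))" using GV_ln by blast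
  have ep: "\<epsilon> > 0" using ed s n by simp
  define \<delta> where "\<delta> = \<epsilon> / sqrt (real n)"
  have sn: "sqrt (real n) > 0" using n by simp
  have dp: "\<delta> > 0" unfolding \<delta>_def using ep sn by simp
  have ndd: "real n * \<delta>\<^sup>2 = \<epsilon>\<^sup>2" unfolding \<delta>_def using sn n by (simp add: power_divide)
  have Csub: "C \<subseteq> Pow {..<n}" using gC unfolding good_def by blast
  have finC: "finite C" using Csub by (meson finite_Pow_iff finite_lessThan finite_subset)
  define S where "S = cube n x \<delta> ` C"
  have xK: "x \<in> K" using ball x ep by (auto simp: eball_def less_imp_le)
  have Sball: "S \<subseteq> eball n x \<epsilon> \<inter> K"
  proof
    fix v assume "v \<in> S"
    then obtain A where v: "v = cube n x \<delta> A" unfolding S_def by blast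
    have "edist n v x = sqrt (\<epsilon>\<^sup>2)" unfolding edist_ssq v cube_center[OF x] ndd ..
    then have "edist n v x = \<epsilon>" using ep by simp
    then have "v \<in> eball n x \<epsilon>" unfolding eball_def using cube_vecs v by auto
    then show "v \<in> eball n x \<epsilon> \<inter> K" using ball by auto
  qed
  have far: "edist n (cube n x \<delta> A) (cube n x \<delta> B) > \<epsilon>" if "A \<in> C" "B \<in> C" "A \<noteq> B" for A B
  proof -
    have nc0: "n < 4 * card (sdiff A B)" using gC that unfolding good_def by blast
    have nc: "real n < 4 * real (card (sdiff A B))" using nc0 by (metis of_nat_less_iff of_nat_mult of_nat_numeral)
    have AB: "A \<subseteq> {..<n}" "B \<subseteq> {..<n}" using Csub that by auto
    have "\<epsilon>\<^sup>2 < 4 * \<delta>\<^sup>2 * real (card (sdiff A B))"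
      unfolding ndd[symmetric] using nc dp by (simp add: mult.commute mult_strict_right_mono)
    then have "\<epsilon>\<^sup>2 < (edist n (cube n x \<delta> A) (cube n x \<delta> B))\<^sup>2" unfolding edist_sq cube_ssq[OF AB] .
    then show ?thesis by (rule power_less_imp_less_base[OF _ edist_nonneg])
  qed
  have inj: "inj_on (cube n x \<delta>) C"
  proof (rule inj_onI, rule ccontr)
    fix A B assume "A \<in> C" "B \<in> C" "cube n x \<delta> A = cube n x \<delta> B" "A \<noteq> B"
    then show False using far[of A B] ep by simp
  qed
  have cardS: "card S = card C" unfolding S_def by (rule card_image[OF inj])
  have sep: "\<forall>v\<in>S. \<forall>w\<in>S. v \<noteq> w \<longrightarrow> edist n v w > \<epsilon> / cstar"
  proof (intro ballI impI)
    fix v w assume "v \<in> S" "w \<in> S" "v \<noteq> w"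
    then obtain A B where "A \<in> C" "B \<in> C" "v = cube n x \<delta> A" "w = cube n x \<delta> B" "A \<noteq> B"
      unfolding S_def by blast
    then have "edist n v w > \<epsilon>" using far by blast
    moreover have "\<epsilon> / cstar \<le> \<epsilon>" using cs ep by (simp add: divide_le_eq)
    ultimately show "edist n v w > \<epsilon> / cstar" by linarith
  qed
  have M: "enat (card C) \<le> Mloc n cstar K \<epsilon>"
    using Mloc_ge[OF xK _ Sball sep] finC unfolding S_def cardS[unfolded S_def] by simp
  have Cp: "card C > 0"
  proof (rule ccontr)
    assume "\<not> card C > 0" then have "card C = 0" by simp
    then show False using lnC n by simp
  qed
  have "\<epsilon>\<^sup>2 / \<sigma>\<^sup>2 = real n / 10" using ed s by (simp add: power_mult_distrib)
  then have e2: "\<epsilon>\<^sup>2 / \<sigma>\<^sup>2 \<le> ln (real (card C))" using lnC by linarith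
  show ?thesis by (rule in_epsset[OF less_imp_le[OF ep] M Cp e2])
qed

lemma ln2_ge: "(1::real) / 4 \<le> ln 2"
proof -
  have "exp (1/4::real) ^ 4 = exp 1" by (simp flip: exp_of_nat_mult)
  also have "\<dots> \<le> 3" by (rule exp_le)
  also have "(3::real) < 2 ^ 4" by simp
  finally have "exp (1/4::real) < 2" by (rule power_less_imp_less_base) simp
  then show ?thesis by (subst ln_ge_iff) auto
qed

lemma large_case:
  assumes cs: "cstar > 1" and s: "\<sigma> > 0" and xK: "x \<in> K" and yK: "y \<in> K" and K: "K \<subseteq> vecs n"
    and D: "edist n x y > 0" and Ds: "(edist n x y)\<^sup>2 / \<sigma>\<^sup>2 \<le> 1/4"
  shows "edist n x y \<in> epsset n cstar K \<sigma>"
proof -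
  let ?D = "edist n x y"
  have xy: "x \<noteq> y" using D by auto
  have S: "{x, y} \<subseteq> eball n x ?D \<inter> K" using xK yK K by (auto simp: eball_def edist_sym edist_nonneg)
  have sep: "\<forall>v\<in>{x,y}. \<forall>w\<in>{x,y}. v \<noteq> w \<longrightarrow> edist n v w > ?D / cstar"
  proof -
    have "?D / cstar < ?D" using cs D by (simp add: divide_less_eq)
    then show ?thesis by (auto simp: edist_sym)
  qed
  have M: "enat (card {x, y}) \<le> Mloc n cstar K ?D" by (rule Mloc_ge[OF xK _ S sep]) simp
  moreover have "card {x, y} = 2" using xy by simp
  ultimately have M2: "enat 2 \<le> Mloc n cstar K ?D" by simp
  have "(edist n x y)\<^sup>2 / \<sigma>\<^sup>2 \<le> ln 2" using Ds ln2_ge by linarith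
  then have "(edist n x y)\<^sup>2 / \<sigma>\<^sup>2 \<le> ln (real 2)" by simp
  then show ?thesis using in_epsset[OF less_imp_le[OF D] M2, of \<sigma>] by simp
qed



lemma eball_zero_sub:
  assumes "k \<in> K" and Kv: "K \<subseteq> vecs n" shows "eball n k 0 \<subseteq> K"
proof
  fix z assume "z \<in> eball n k 0"
  then have z: "z \<in> vecs n" "edist n z k \<le> 0" unfolding eball_def by auto
  then have "edist n z k = 0" using edist_nonneg[of n z k] by linarith
  then have "ssq n z k = 0" by (simp add: edist_ssq ssq_nonneg)
  moreover have "k \<in> vecs n" using assms by blast
  ultimately have "z = k" by (rule ssq_zero_eq[OF z(1), rotated])
  then show "z \<in> K" using assms by simp
qed

lemma main_bound:
  fixes cstar :: real and n :: nat and K :: "(nat \<Rightarrow> real) set" and \<sigma> :: real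
  assumes cs: "cstar \<ge> 2"
  assumes H: "n \<ge> 1 \<and> K \<noteq> {} \<and> K \<subseteq> vecs n \<and> closed_vec n K \<and> convex_vec n K \<and> bounded_vec n K
      \<and> \<sigma> > 0 \<and> (\<sigma> \<le> 1/4 * inradius n K / sqrt (real n) \<or> \<sigma> \<ge> 2 * diam_vec n K)"
  shows "lse_risk n \<sigma> K \<le> ennreal ((4 * eps_star n cstar K \<sigma>)\<^sup>2)"
proof -
  from H have n: "n \<ge> 1" and ne: "K \<noteq> {}" and Kv: "K \<subseteq> vecs n" and cl: "closed_vec n K"
    and cv: "convex_vec n K" and bd: "bounded_vec n K" and s: "\<sigma> > 0" by auto
  have cs0: "cstar > 0" "cstar \<ge> 1" "cstar > 1" using cs by auto
  let ?E = "eps_star n cstar K \<sigma>"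
  from H have "\<sigma> \<le> 1/4 * inradius n K / sqrt (real n) \<or> \<sigma> \<ge> 2 * diam_vec n K" by blast
  then show "lse_risk n \<sigma> K \<le> ennreal ((4 * ?E)\<^sup>2)"
  proof
    assume sm: "\<sigma> \<le> 1/4 * inradius n K / sqrt (real n)"
    define r where "r = inradius n K"
    have sn: "sqrt (real n) > 0" using n by simp
    have "\<sigma> \<le> (1/4 * r) / sqrt (real n)" using sm unfolding r_def by simp
    then have "\<sigma> * sqrt (real n) \<le> 1/4 * r" using sn by (simp add: pos_le_divide_eq)
    then have sr: "\<sigma> * sqrt (real n) \<le> r / 4" by simp
    have "\<sigma> * sqrt (real n) > 0" by (rule mult_pos_pos[OF s sn])
    then have rp: "r > 0" using sr by linarith
    define \<epsilon> where "\<epsilon> = \<sigma> * sqrt (real n / 10)"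
    have "sqrt (real n / 10) \<le> sqrt (real n)" by (intro real_sqrt_le_mono) auto
    then have "\<epsilon> \<le> \<sigma> * sqrt (real n)" unfolding \<epsilon>_def using s by (intro mult_left_mono) auto
    then have er: "\<epsilon> < r" using sr rp by linarith
    define R where "R = {\<rho>. 0 \<le> \<rho> \<and> (\<exists>x\<in>vecs n. eball n x \<rho> \<subseteq> K)}"
    obtain k where k: "k \<in> K" using ne by blast
    have "0 \<in> R" unfolding R_def using k Kv eball_zero_sub[OF k Kv] by blast
    then have Rne: "R \<noteq> {}" by blast
    have "\<epsilon> < Sup R" using er unfolding r_def inradius_def R_def by simp
    then obtain \<rho> where "\<rho> \<in> R" "\<epsilon> < \<rho>" using less_cSupD[OF Rne] by blast
    then obtain x where x: "x \<in> vecs n" "eball n x \<rho> \<subseteq> K" unfolding R_def by blast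
    have "eball n x \<epsilon> \<subseteq> eball n x \<rho>" using \<open>\<epsilon> < \<rho>\<close> unfolding eball_def by auto
    then have ball: "eball n x \<epsilon> \<subseteq> K" using x by blast
    have "\<epsilon> \<in> epsset n cstar K \<sigma>" by (rule small_case[OF n cs0(2) s x(1) ball \<epsilon>_def])
    then have eE: "\<epsilon> \<le> ?E" by (rule eps_star_ge[OF ne bd cs0(1) s])
    have e0: "0 \<le> \<epsilon>" unfolding \<epsilon>_def using s by simp
    have "real n * \<sigma>\<^sup>2 = 10 * \<epsilon>\<^sup>2" unfolding \<epsilon>_def using s by (simp add: power_mult_distrib)
    also have "\<dots> \<le> 10 * ?E\<^sup>2" using eE e0 by (intro mult_left_mono power_mono) auto
    also have "\<dots> \<le> (4 * ?E)\<^sup>2" by (simp add: power_mult_distrib)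
    finally have "real n * \<sigma>\<^sup>2 \<le> (4 * ?E)\<^sup>2" .
    then have "ennreal (real n * \<sigma>\<^sup>2) \<le> ennreal ((4 * ?E)\<^sup>2)" by (rule ennreal_leI)
    then show ?thesis using risk_le_n[OF ne cl bd cv s] by (rule order_trans[rotated])
  next
    assume lg: "\<sigma> \<ge> 2 * diam_vec n K"
    define d where "d = diam_vec n K"
    have d0: "0 \<le> d" unfolding d_def by (rule diam_nonneg[OF bd ne])
    have risk: "lse_risk n \<sigma> K \<le> ennreal (d\<^sup>2)" unfolding d_def by (rule risk_le_d[OF ne cl bd cv s])
    show ?thesis
    proof (cases "d = 0")
      case True
      then show ?thesis using risk by simp
    next
      case False
      then have dp: "d > 0" using d0 by simp
      define DS where "DS = {edist n x y | x y. x \<in> K \<and> y \<in> K}"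
      have DSne: "DS \<noteq> {}" unfolding DS_def using ne by blast
      have "d / 2 < Sup DS" using dp unfolding d_def diam_vec_def DS_def by simp
      then obtain D where "D \<in> DS" "d / 2 < D" using less_cSupD[OF DSne] by blast
      then obtain x y where xy: "x \<in> K" "y \<in> K" "D = edist n x y" and Dg: "d / 2 < D" unfolding DS_def by blast
      have Dd: "D \<le> d" unfolding d_def xy(3) by (rule diam_ge[OF bd xy(1,2)])
      have Dp: "edist n x y > 0" using Dg dp xy(3) by linarith
      have "(edist n x y)\<^sup>2 \<le> d\<^sup>2" using Dd Dp xy(3) by (intro power_mono) auto
      also have "\<dots> \<le> \<sigma>\<^sup>2 / 4"
      proof -
        have "(2 * d)\<^sup>2 \<le> \<sigma>\<^sup>2" using lg d0 unfolding d_def[symmetric] by (intro power_mono) auto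
        then show ?thesis by (simp add: power_mult_distrib)
      qed
      finally have e4: "(edist n x y)\<^sup>2 \<le> \<sigma>\<^sup>2 / 4" .
      have "(edist n x y)\<^sup>2 / \<sigma>\<^sup>2 \<le> (\<sigma>\<^sup>2 / 4) / \<sigma>\<^sup>2" by (rule divide_right_mono[OF e4]) simp
      also have "(\<sigma>\<^sup>2 / 4) / \<sigma>\<^sup>2 = 1/4" using s by simp
      finally have "(edist n x y)\<^sup>2 / \<sigma>\<^sup>2 \<le> 1/4" .
      then have "edist n x y \<in> epsset n cstar K \<sigma>" by (rule large_case[OF cs0(3) s xy(1,2) Kv Dp])
      then have DE: "D \<le> ?E" unfolding xy(3) by (rule eps_star_ge[OF ne bd cs0(1) s])
      have "d\<^sup>2 \<le> (4 * ?E)\<^sup>2" using Dg DE d0 by (intro power_mono) auto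
      then have "ennreal (d\<^sup>2) \<le> ennreal ((4 * ?E)\<^sup>2)" by (rule ennreal_leI)
      then show ?thesis using risk by (rule order_trans[rotated])
    qed
  qed
qed

theorem mainTheorem18:
  shows "\<exists>c0>0. \<forall>cstar\<ge>c0. \<exists>C>0. \<exists>c1>0. \<exists>c2>0.
    \<forall>(n::nat) (K::(nat \<Rightarrow> real) set) (\<sigma>::real).
      n \<ge> 1 \<and> K \<noteq> {} \<and> K \<subseteq> vecs n \<and> closed_vec n K \<and> convex_vec n K \<and> bounded_vec n K
      \<and> \<sigma> > 0
      \<and> (\<sigma> \<le> c1 * inradius n K / sqrt (real n) \<or> \<sigma> \<ge> c2 * diam_vec n K)
      \<longrightarrow> lse_risk n \<sigma> K \<le> ennreal ((C * eps_star n cstar K \<sigma>)\<^sup>2)"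
proof (rule exI[of _ "2::real"], rule conjI, simp, intro allI impI)
  fix cstar :: real assume cs: "cstar \<ge> 2"
  show "\<exists>C>0. \<exists>c1>0. \<exists>c2>0.
    \<forall>(n::nat) (K::(nat \<Rightarrow> real) set) (\<sigma>::real).
      n \<ge> 1 \<and> K \<noteq> {} \<and> K \<subseteq> vecs n \<and> closed_vec n K \<and> convex_vec n K \<and> bounded_vec n K
      \<and> \<sigma> > 0
      \<and> (\<sigma> \<le> c1 * inradius n K / sqrt (real n) \<or> \<sigma> \<ge> c2 * diam_vec n K)
      \<longrightarrow> lse_risk n \<sigma> K \<le> ennreal ((C * eps_star n cstar K \<sigma>)\<^sup>2)"
    apply (rule exI[of _ "4::real"], rule conjI, simp)
    apply (rule exI[of _ "1/4::real"], rule conjI, simp)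
    apply (rule exI[of _ "2::real"], rule conjI, simp)
    apply (intro allI impI)
    apply (rule main_bound[OF cs])
    apply assumption
    done
qed


end
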